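(* Let $R$ be a $*$-ring, let $a\in R$, and let $n\geq 3$ be an integer. Then $a$ is core invertible if and only if there exists $b\in R$ such that ${}^{\circ}a=Rb$ and $u=a^{*}a^{n}+b^{*}b$ is invertible. In this case $$a^{\mathrm{core}}=a^{n-1}u^{-1}a^{*}.$$
   Context: A $*$-ring is an associative ring with identity $1$ and an involution $*$, i.e. $(a^* )^*=a$, $(ab)^*=b^*a^*$ and $(a+b)^*=a^*+b^*$. For $a\in R$: ${}^{\circ}a=\{x\in R : xa=0\}$ and $Rb=\{xb : x\in R\}$. An element $a$ is core invertible if there is $x\in R$ with $(ax)^*=ax$, $ax^2=x$ and $xa^2=a$. Such an $x$ is unique and denoted $a^{\mathrm{core}}$. "Invertible" means having a two-sided inverse in $R$. *)

theory Defs
  imports Main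
begin

class star_ring = ring_1 +
  fixes star :: "'a \<Rightarrow> 'a"
  assumes star_star: "star (star a) = a"
    and star_mult: "star (a * b) = star b * star a"
    and star_add: "star (a + b) = star a + star b"

definition invertible_el :: "'a::ring_1 \<Rightarrow> bool" where
  "invertible_el u \<longleftrightarrow> (\<exists>v. u * v = 1 \<and> v * u = 1)"

definition ring_inv :: "'a::ring_1 \<Rightarrow> 'a" where
  "ring_inv u = (THE v. u * v = 1 \<and> v * u = 1)"

definition left_ann :: "'a::ring_1 \<Rightarrow> 'a set" where
  "left_ann a = {x. x * a = 0}"

definition left_ideal_gen :: "'a::ring_1 \<Rightarrow> 'a set" where
  "left_ideal_gen b = {x * b | x. True}"

definition is_core_inverse :: "'a::star_ring \<Rightarrow> 'a \<Rightarrow> bool" where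
  "is_core_inverse a x \<longleftrightarrow> star (a * x) = a * x \<and> a * x^2 = x \<and> x * a^2 = a"

definition core_invertible :: "'a::star_ring \<Rightarrow> bool" where
  "core_invertible a \<longleftrightarrow> (\<exists>x. is_core_inverse a x)"

definition core_inverse :: "'a::star_ring \<Rightarrow> 'a" where
  "core_inverse a = (THE x. is_core_inverse a x)"

end

theory Submission
  imports Defs
begin

lemma star_one[simp]: "star (1::'a::star_ring) = 1"
proof -
  have "star (1::'a) = star 1 * star (star 1)" by (simp only: star_star mult_1_right)
  also have "\<dots> = star (star 1 * 1)" by (rule star_mult[symmetric])
  also have "\<dots> = 1" by (simp add: star_star)
  finally show ?thesis .
qed

lemma star_zero[simp]: "star (0::'a::star_ring) = 0"
proof -
  have "star (0::'a) = star (0 + 0)" by simp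
  also have "\<dots> = star 0 + star 0" by (rule star_add)
  finally show ?thesis by simp
qed

lemma star_diff: "star ((x::'a::star_ring) - y) = star x - star y"
proof -
  have "star (x - y) + star y = star x" by (metis star_add diff_add_cancel)
  then show ?thesis by (simp add: eq_diff_eq)
qed

lemma star_pow: "star ((x::'a::star_ring) ^ k) = (star x) ^ k"
  by (induction k) (simp_all add: star_mult power_commutes)

lemma invertible_inv:
  assumes "invertible_el (u::'a::ring_1)"
  shows "u * ring_inv u = 1 \<and> ring_inv u * u = 1"
proof -
  from assms obtain v where v: "u * v = 1" "v * u = 1" unfolding invertible_el_def by blast
  have "\<exists>!w. u * w = 1 \<and> w * u = 1"
  proof (rule ex1I[of _ v])
    show "u * v = 1 \<and> v * u = 1" using v by simp
    fix w assume w: "u * w = 1 \<and> w * u = 1"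
    have "w = w * (u * v)" using v by simp
    also have "\<dots> = (w * u) * v" by (simp add: mult.assoc)
    also have "\<dots> = v" using w by simp
    finally show "w = v" .
  qed
  then show ?thesis unfolding ring_inv_def by (rule theI')
qed

lemma herm_lemma:
  fixes x Z :: "'a::star_ring"
  assumes "x = Z * star x * x"
  shows "star (x * star Z) = x * star Z \<and> x * star Z * x = x"
proof -
  have xs: "star x = star x * x * star Z"
    using arg_cong[OF assms, of star] by (simp add: star_mult star_star mult.assoc)
  have "Z * star x = Z * star x * x * star Z" using xs by (metis mult.assoc)
  also have "\<dots> = x * star Z" using assms by simp
  finally have e: "Z * star x = x * star Z" .
  have "star (x * star Z) = Z * star x" by (simp add: star_mult star_star)
  with e have "star (x * star Z) = x * star Z" by simp
  moreover have "x * star Z * x = x" using e assms by (metis mult.assoc)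
  ultimately show ?thesis by simp
qed

lemma pow_shift:
  fixes a S :: "'a::ring_1"
  assumes "a = S * a * a"
  shows "a ^ Suc k = S * a ^ Suc (Suc k)"
proof -
  have "a ^ Suc k = a * a ^ k" by simp
  also have "\<dots> = S * a * a * a ^ k" using assms by simp
  also have "\<dots> = S * a ^ Suc (Suc k)" by (simp add: mult.assoc)
  finally show ?thesis .
qed

lemma lemmaA:
  fixes a b v :: "'a::star_ring" and n :: nat
  assumes n: "n \<ge> 3" and ba: "b * a = 0"
    and uv: "(star a * a ^ n + star b * b) * v = 1"
  shows "is_core_inverse a (a ^ (n - 1) * v * star a)"
proof -
  have sab: "star a * star b = 0" using ba by (metis star_mult star_zero)
  have st1: "star a = star a * star a * a ^ n * v"
  proof -
    have "star a = star a * ((star a * a ^ n + star b * b) * v)" using uv by simp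
    also have "\<dots> = star a * star a * a ^ n * v + (star a * star b) * b * v"
      by (simp add: algebra_simps)
    finally show ?thesis using sab by simp
  qed
  define S where "S = star v * star (a ^ n)"
  have aS: "a = S * a * a"
  proof -
    have "a = star (star a)" by (simp add: star_star)
    also have "\<dots> = star (star a * star a * a ^ n * v)" using st1 by simp
    also have "\<dots> = S * a * a" unfolding S_def by (simp add: star_mult star_star mult.assoc)
    finally show ?thesis .
  qed
  define Z where "Z = a * star v * star (a ^ (n - 2))"
  have an: "a ^ n = a * a * a ^ (n - 2)"
  proof -
    have "n = Suc (Suc (n - 2))" using n by simp
    then have "a ^ n = a ^ Suc (Suc (n - 2))" by simp
    then show ?thesis by (simp add: mult.assoc)
  qed
  have an3: "a ^ n = a * a * a * a ^ (n - 3)"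
  proof -
    have "n = Suc (Suc (Suc (n - 3)))" using n by simp
    then have "a ^ n = a ^ Suc (Suc (Suc (n - 3)))" by simp
    then show ?thesis by (simp add: mult.assoc)
  qed
  have an1: "a ^ n = a * a ^ (n - 1)"
  proof -
    have "n = Suc (n - 1)" using n by simp
    then have "a ^ n = a ^ Suc (n - 1)" by simp
    then show ?thesis by simp
  qed
  have Zx: "a * a = Z * star (a * a) * (a * a)"
  proof -
    have "star (a ^ (n - 2)) * star (a * a) = star (a ^ n)"
      using an by (simp add: star_mult mult.assoc)
    then have "Z * star (a * a) * (a * a) = a * (S * a * a)"
      unfolding Z_def S_def by (simp add: mult.assoc)
    then show ?thesis using aS by simp
  qed
  define p where "p = a ^ n * v * star a"
  have pZ: "a * a * star Z = p"
    unfolding Z_def p_def using an by (simp add: star_mult star_star mult.assoc)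
  from herm_lemma[OF Zx] pZ have ph: "star p = p" and pa2: "p * (a * a) = a * a" by auto
  define t where "t = a ^ (n - 3) * v * star a * a * a"
  have a2: "a * a = a * a * a * t"
  proof -
    have "a * a = p * (a * a)" using pa2 by simp
    also have "\<dots> = a * a * a * t" unfolding p_def t_def using an3 by (simp add: mult.assoc)
    finally show ?thesis .
  qed
  have at: "a = a * a * t"
  proof -
    have "a - a * a * t = S * (a * a - a * a * a * t)"
    proof -
      have "a * a * t = S * a * a * a * t" using aS by (metis mult.assoc)
      then have "a - a * a * t = S * a * a - S * a * a * a * t" using aS by simp
      then show ?thesis by (simp add: algebra_simps)
    qed
    then show ?thesis using a2 by simp
  qed
  have pa: "p * a = a"
  proof -
    have "p * a = p * (a * a) * t" using at by (metis mult.assoc)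
    then show ?thesis using pa2 at by simp
  qed
  have pak: "p * a ^ Suc k = a ^ Suc k" for k
    using pa by (metis mult.assoc power_Suc)
  define x where "x = a ^ (n - 1) * v * star a"
  have ax: "a * x = p" unfolding x_def p_def using an1 by (simp add: mult.assoc)
  have n1: "n - 1 = Suc (n - 2)" using n by simp
  have ax2: "a * x ^ 2 = x"
  proof -
    have "a * x ^ 2 = (a * x) * x" by (simp add: power2_eq_square mult.assoc)
    also have "\<dots> = p * x" using ax by simp
    also have "\<dots> = p * a ^ (n - 1) * v * star a" by (simp add: x_def mult.assoc)
    also have "\<dots> = x" unfolding x_def using pak[of "n - 2"] n1 by simp
    finally show ?thesis .
  qed
  have xa2: "x * a ^ 2 = a"
  proof -
    have "a ^ (n - 1) = S * a ^ n"
    proof -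
      have n2: "Suc (Suc (n - 2)) = n" using n by simp
      have "a ^ Suc (n - 2) = S * a ^ n" using pow_shift[OF aS, of "n - 2"] unfolding n2 .
      then show ?thesis unfolding n1[symmetric] .
    qed
    then have "x * a ^ 2 = S * (p * (a * a))" unfolding x_def p_def by (simp add: power2_eq_square mult.assoc)
    also have "\<dots> = a" using pa2 aS by (simp add: mult.assoc)
    finally show ?thesis .
  qed
  show ?thesis unfolding is_core_inverse_def using ax ph ax2 xa2 x_def by simp
qed

lemma core_basic:
  fixes a c :: "'a::star_ring"
  assumes "is_core_inverse a c"
  shows "star (a * c) = a * c" "a * c * c = c" "c * a * a = a" "a * c * a = a" "c * a * c = c"
proof -
  from assms have h: "star (a * c) = a * c" "a * c ^ 2 = c" "c * a ^ 2 = a"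
    unfolding is_core_inverse_def by auto
  show 1: "star (a * c) = a * c" using h by simp
  show 2: "a * c * c = c" using h(2) by (simp add: power2_eq_square mult.assoc)
  show 3: "c * a * a = a" using h(3) by (simp add: power2_eq_square mult.assoc)
  show "a * c * a = a"
  proof -
    have "a * c * a = a * c * (c * a * a)" using 3 by simp
    also have "\<dots> = (a * c * c) * a * a" by (simp add: mult.assoc)
    also have "\<dots> = a" using 2 3 by simp
    finally show ?thesis .
  qed
  show "c * a * c = c"
  proof -
    have "c * a * c = c * a * (a * c * c)" using 2 by simp
    also have "\<dots> = (c * a * a) * c * c" by (simp add: mult.assoc)
    also have "\<dots> = c" using 2 3 by simp
    finally show ?thesis .
  qed
qed

lemma core_unique:
  fixes a x y :: "'a::star_ring"
  assumes x: "is_core_inverse a x" and y: "is_core_inverse a y"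
  shows "x = y"
proof -
  note X = core_basic[OF x] and Y = core_basic[OF y]
  have 1: "a * x = (a * y) * (a * x)" using Y(4) by (metis mult.assoc)
  have 2: "a * y = (a * x) * (a * y)" using X(4) by (metis mult.assoc)
  have "a * x = star (a * x)" using X(1) by simp
  also have "\<dots> = star (a * x) * star (a * y)" using 1 by (metis star_mult)
  also have "\<dots> = a * y" using X(1) Y(1) 2 by simp
  finally have axy: "a * x = a * y" .
  have "y * a * x = y * a * (a * x * x)" using X(2) by simp
  also have "\<dots> = (y * a * a) * x * x" by (simp add: mult.assoc)
  also have "\<dots> = x" using Y(3) X(2) by simp
  finally have e1: "y * a * x = x" .
  have "y * a * x = y * (a * y)" using axy by (simp add: mult.assoc)
  also have "\<dots> = y" using Y(5) by (simp add: mult.assoc)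
  finally show ?thesis using e1 by simp
qed

lemma core_inverse_eq:
  assumes "is_core_inverse a x"
  shows "core_inverse a = x"
  unfolding core_inverse_def
  using assms core_unique by (metis the_equality)

lemma lemmaB:
  fixes a c :: "'a::star_ring" and n :: nat
  assumes c: "is_core_inverse a c" and n: "n \<ge> 1"
  shows "left_ann a = left_ideal_gen (1 - a * c) \<and>
         invertible_el (star a * a ^ n + star (1 - a * c) * (1 - a * c))"
proof -
  note C = core_basic[OF c]
  define P where "P = a * c"
  define Q where "Q = 1 - P"
  define E where "E = c * a"
  have sP: "star P = P" using C(1) P_def by simp
  have sQ: "star Q = Q" unfolding Q_def using sP by (simp add: star_diff)
  have PP: "P * P = P" unfolding P_def using C(4) by (metis mult.assoc)
  have QQ: "Q * Q = Q" unfolding Q_def using PP by (simp add: algebra_simps)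
  have Qa: "Q * a = 0" unfolding Q_def P_def using C(4) by (simp add: algebra_simps)
  have Qc: "Q * c = 0" unfolding Q_def P_def using C(2) by (simp add: algebra_simps)
  have ann: "left_ann a = left_ideal_gen Q"
  proof (intro set_eqI iffI)
    fix y assume "y \<in> left_ann a"
    then have "y * a = 0" unfolding left_ann_def by simp
    then have "y = y * Q" unfolding Q_def P_def by (simp add: algebra_simps mult.assoc[symmetric])
    then show "y \<in> left_ideal_gen Q" unfolding left_ideal_gen_def by blast
  next
    fix y assume "y \<in> left_ideal_gen Q"
    then obtain r where "y = r * Q" unfolding left_ideal_gen_def by blast
    then show "y \<in> left_ann a" unfolding left_ann_def using Qa by (simp add: mult.assoc)
  qed
  obtain m where m: "n = Suc m" using n by (cases n) auto
  have acpow: "a ^ Suc k * c ^ Suc k = P" for k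
  proof (induction k)
    case 0 then show ?case by (simp add: P_def)
  next
    case (Suc k)
    have e1: "a ^ Suc (Suc k) = a ^ Suc k * a" by (rule power_Suc2)
    have e2: "c ^ Suc (Suc k) = c * c * c ^ k" by (simp add: mult.assoc)
    have "a ^ Suc (Suc k) * c ^ Suc (Suc k) = a ^ Suc k * (a * c * c) * c ^ k"
      unfolding e1 e2 by (simp only: mult.assoc)
    also have "\<dots> = a ^ Suc k * c ^ Suc k" using C(2) by (simp add: mult.assoc)
    finally show ?case using Suc by simp
  qed
  have capow: "c ^ Suc k * a ^ Suc k = E" for k
  proof (induction k)
    case 0 then show ?case by (simp add: E_def)
  next
    case (Suc k)
    have e1: "c ^ Suc (Suc k) = c ^ Suc k * c" by (rule power_Suc2)
    have e2: "a ^ Suc (Suc k) = a * a * a ^ k" by (simp add: mult.assoc)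
    have "c ^ Suc (Suc k) * a ^ Suc (Suc k) = c ^ Suc k * (c * a * a) * a ^ k"
      unfolding e1 e2 by (simp only: mult.assoc)
    also have "\<dots> = c ^ Suc k * a ^ Suc k" using C(3) by (simp add: mult.assoc)
    finally show ?case using Suc by simp
  qed
  have Qcn: "Q * c ^ n = 0" using Qc m by (simp add: mult.assoc[symmetric])
  have sac: "star a * P = star a"
  proof -
    have "star a * P = star a * star P" using sP by simp
    also have "\<dots> = star (P * a)" by (simp add: star_mult)
    also have "\<dots> = star a" unfolding P_def using C(4) by simp
    finally show ?thesis .
  qed
  have Pan: "P * a ^ n = a ^ n" unfolding P_def m using C(4) by (simp add: mult.assoc[symmetric])
  have ancan: "a ^ n * c * a = a ^ n"
  proof -
    have "a ^ n * c * a = a ^ m * (a * c * a)" unfolding m by (simp add: power_Suc2 mult.assoc del: power_Suc)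
    then show ?thesis using C(4) m by (simp add: power_Suc2 del: power_Suc)
  qed
  have EP: "E * P = P" unfolding E_def P_def using C(3) by (metis mult.assoc)
  have sE: "star E = star a * star c" unfolding E_def by (simp add: star_mult)
  define u where "u = star a * a ^ n + Q * Q"
  define v where "v = c ^ n * star c + (1 - E) * star (1 - E)"
  have uQ: "star a * a ^ n + star (1 - a * c) * (1 - a * c) = u"
    unfolding u_def Q_def P_def using sQ Q_def P_def by simp
  have ucn: "u * c ^ n = star a"
  proof -
    have "u * c ^ n = star a * (a ^ n * c ^ n) + Q * (Q * c ^ n)" unfolding u_def by (simp add: algebra_simps)
    also have "\<dots> = star a" using acpow[of m] m Qcn sac by simp
    finally show ?thesis .
  qed
  have uE: "u * (1 - E) = Q"
  proof -
    have "u * (1 - E) = u - star a * (a ^ n * c * a) - Q * (Q * c) * a"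
      unfolding u_def E_def by (simp add: algebra_simps)
    then show ?thesis using ancan Qc QQ unfolding u_def by simp
  qed
  have QsE: "Q * star E = star E - P"
  proof -
    have "Q * star E = star Q * star E" using sQ by simp
    also have "\<dots> = star (E * Q)" by (simp add: star_mult)
    also have "E * Q = E - P" unfolding Q_def using EP by (simp add: algebra_simps)
    finally show ?thesis using sP by (simp add: star_diff)
  qed
  have uv: "u * v = 1"
  proof -
    have "u * v = (u * c ^ n) * star c + (u * (1 - E)) * star (1 - E)"
      unfolding v_def by (simp add: algebra_simps)
    also have "\<dots> = star a * star c + Q * star (1 - E)" using ucn uE by simp
    also have "\<dots> = star E + Q - Q * star E" using sE by (simp add: star_diff algebra_simps)
    also have "\<dots> = 1" using QsE Q_def by simp
    finally show ?thesis .
  qed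
  have scu: "star c * u = a ^ n"
  proof -
    have "star c * u = star c * star a * a ^ n + star c * star Q * Q" unfolding u_def using sQ by (simp add: algebra_simps)
    also have "star c * star a = P" using sP P_def by (simp add: star_mult)
    also have "star c * star Q = 0" using Qc by (metis star_mult star_zero)
    finally show ?thesis using Pan by simp
  qed
  have sEu: "star (1 - E) * u = Q"
  proof -
    have "star (1 - E) * u = u - star a * (star c * u)" using sE by (simp add: star_diff algebra_simps)
    also have "\<dots> = Q" using scu QQ unfolding u_def by simp
    finally show ?thesis .
  qed
  have vu: "v * u = 1"
  proof -
    have "v * u = c ^ n * (star c * u) + (1 - E) * (star (1 - E) * u)"
      unfolding v_def by (simp add: algebra_simps)
    also have "\<dots> = E + (1 - E) * Q" using scu sEu capow[of m] m by simp
    also have "(1 - E) * Q = 1 - E" unfolding Q_def using EP by (simp add: algebra_simps)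
    finally show ?thesis by simp
  qed
  have "invertible_el u" unfolding invertible_el_def using uv vu by blast
  then show ?thesis using ann uQ unfolding Q_def P_def by simp
qed

theorem theorem2p6:
  fixes a :: "'a::star_ring" and n :: nat
  assumes "n \<ge> 3"
  shows "(core_invertible a \<longleftrightarrow>
           (\<exists>b. left_ann a = left_ideal_gen b \<and>
                invertible_el (star a * a ^ n + star b * b)))
       \<and> (\<forall>b. left_ann a = left_ideal_gen b \<and>
                invertible_el (star a * a ^ n + star b * b) \<longrightarrow>
              core_inverse a = a ^ (n - 1) * ring_inv (star a * a ^ n + star b * b) * star a)"
proof -
  have key: "is_core_inverse a (a ^ (n - 1) * ring_inv (star a * a ^ n + star b * b) * star a)"
    if h: "left_ann a = left_ideal_gen b" "invertible_el (star a * a ^ n + star b * b)" for b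
  proof -
    have "b \<in> left_ideal_gen b" unfolding left_ideal_gen_def by (metis (mono_tags) mem_Collect_eq mult_1_left)
    then have ba: "b * a = 0" using h(1) unfolding left_ann_def by auto
    show ?thesis using lemmaA[OF assms ba] invertible_inv[OF h(2)] by blast
  qed
  have fwd: "\<exists>b. left_ann a = left_ideal_gen b \<and> invertible_el (star a * a ^ n + star b * b)"
    if "core_invertible a"
  proof -
    from that obtain c where "is_core_inverse a c" unfolding core_invertible_def by blast
    from lemmaB[OF this, of n] assms show ?thesis by auto
  qed
  show ?thesis
    using key fwd core_inverse_eq unfolding core_invertible_def by blast
qed

end
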